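(* Assume (H1) and (H2), and fix $\alpha_0>0$. Then for all $f_1,f_1^*\in C[0,\alpha_0]$, $$\|U^{\alpha_0}(f_1)-U^{\alpha_0}(f_1^* )\|\le \varphi(\alpha_0)\,\|f_1-f_1^*\|,\qquad \varphi(\alpha_0):=2D^*\bar F_1(\alpha_0).$$
   Context: Fix constants $a>0$, $Q_0>0$, $\lambda_0>0$, $\theta_m>0$ and put $D^*=\frac{Q_0}{4\pi\lambda_0\theta_m}$. For $\alpha_0>0$: $C[0,\alpha_0]$ is the Banach space of real continuous functions on $[0,\alpha_0]$ with norm $\|f\|=\max_{[0,\alpha_0]}|f|$. We are given maps $L^*,N^*$ assigning to each $f_1\in C[0,\alpha_0]$ positive continuous functions $L^*(f_1),N^*(f_1)$ on $(0,\alpha_0]$. Define, for $0\le\eta\le\alpha_0$: $E_1(0,\eta,f_1)=\exp\big(-\alpha_0 a\int_0^{\eta}\frac{N^*(f_1)(s)}{L^*(f_1)(s)}ds\big)$, $F_1(0,\eta,f_1)=\int_0^{\eta}\frac{E_1(0,s,f_1)}{s\,L^*(f_1)(s)}ds$, and the operator $U^{\alpha_0}(f_1)(\eta)=D^*\big[F_1(0,\alpha_0,f_1)-F_1(0,\eta,f_1)\big]$, $0\le\eta\le\alpha_0$. Hypothesis (H1) (the part used here): there are positive constants $\mu,\nu,L_{1m},L_{1M},N_{1m},N_{1M}$ with $\mu>\max(1,\nu)$ such that for all $\alpha_0>0$, all $f_1\in C[0,\alpha_0]$ and all $0<\eta\le\alpha_0$: $L_{1m}\eta^{-\mu}\le L^*(f_1)(\eta)\le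 L_{1M}\eta^{-\mu}$ and $N_{1m}\eta^{-\nu}\le N^*(f_1)(\eta)\le N_{1M}\eta^{-\nu}$. Hypothesis (H2) (the part used here): there are constants $\bar L_1,\bar N_1\ge0$ such that for all $\alpha_0>0$ and all $f_1,f_1^*\in C[0,\alpha_0]$: $\sup_{0<s\le\alpha_0}|L^*(f_1)(s)-L^*(f_1^* )(s)|\le\bar L_1\|f_1-f_1^*\|$ and $\sup_{0<s\le\alpha_0}|N^*(f_1)(s)-N^*(f_1^* )(s)|\le\bar N_1\|f_1-f_1^*\|$. For $z>0$, $\bar F_1(z)=\frac{za}{L_{1m}^2}\Big(\frac{\bar N_1 z^{2\mu+1}}{(\mu+1)(2\mu+1)}+\frac{\bar L_1N_{1M}}{L_{1m}}\frac{z^{3\mu-\nu+1}}{(2\mu-\nu+1)(3\mu-\nu+1)}\Big)+\frac{\bar L_1}{L_{1m}^2}\frac{z^{2\mu}}{2\mu}$. *)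

theory Defs
  imports "HOL-Analysis.Analysis"
begin

definition supnorm :: "real \<Rightarrow> (real \<Rightarrow> real) \<Rightarrow> real" where
  "supnorm \<alpha>0 f = (SUP x\<in>{0..\<alpha>0}. \<bar>f x\<bar>)"

definition Dstar :: "real \<Rightarrow> real \<Rightarrow> real \<Rightarrow> real" where
  "Dstar Q0 lam0 \<theta>m = Q0 / (4 * pi * lam0 * \<theta>m)"

text \<open>L and N are the maps L^*, N^* for the fixed alpha0, applied to f1.\<close>
definition E1 :: "real \<Rightarrow> real \<Rightarrow> ((real \<Rightarrow> real) \<Rightarrow> real \<Rightarrow> real)
    \<Rightarrow> ((real \<Rightarrow> real) \<Rightarrow> real \<Rightarrow> real) \<Rightarrow> (real \<Rightarrow> real) \<Rightarrow> real \<Rightarrow> real" where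
  "E1 a \<alpha>0 L N f \<eta> = exp (- (\<alpha>0 * a * integral {0..\<eta>} (\<lambda>s. N f s / L f s)))"

definition F1 :: "real \<Rightarrow> real \<Rightarrow> ((real \<Rightarrow> real) \<Rightarrow> real \<Rightarrow> real)
    \<Rightarrow> ((real \<Rightarrow> real) \<Rightarrow> real \<Rightarrow> real) \<Rightarrow> (real \<Rightarrow> real) \<Rightarrow> real \<Rightarrow> real" where
  "F1 a \<alpha>0 L N f \<eta> = integral {0..\<eta>} (\<lambda>s. E1 a \<alpha>0 L N f s / (s * L f s))"

definition Uop :: "real \<Rightarrow> real \<Rightarrow> real \<Rightarrow> real \<Rightarrow> real \<Rightarrow> ((real \<Rightarrow> real) \<Rightarrow> real \<Rightarrow> real)
    \<Rightarrow> ((real \<Rightarrow> real) \<Rightarrow> real \<Rightarrow> real) \<Rightarrow> (real \<Rightarrow> real) \<Rightarrow> real \<Rightarrow> real" where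
  "Uop a Q0 lam0 \<theta>m \<alpha>0 L N f \<eta> =
     Dstar Q0 lam0 \<theta>m * (F1 a \<alpha>0 L N f \<alpha>0 - F1 a \<alpha>0 L N f \<eta>)"

definition Fbar1 :: "real \<Rightarrow> real \<Rightarrow> real \<Rightarrow> real \<Rightarrow> real \<Rightarrow> real \<Rightarrow> real \<Rightarrow> real \<Rightarrow> real" where
  "Fbar1 a \<mu> \<nu> L1m N1M Lbar Nbar z =
     z * a / L1m^2 * (Nbar * z powr (2*\<mu>+1) / ((\<mu>+1) * (2*\<mu>+1))
        + Lbar * N1M / L1m * z powr (3*\<mu>-\<nu>+1) / ((2*\<mu>-\<nu>+1) * (3*\<mu>-\<nu>+1)))
     + Lbar / L1m^2 * z powr (2*\<mu>) / (2*\<mu>)"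

end

theory Submission imports Defs begin
lemma int_cont_bdd:
  fixes f :: "real \<Rightarrow> real"
  assumes c: "continuous_on {0<..b} f" and bd: "\<And>t. t \<in> {0<..b} \<Longrightarrow> \<bar>f t\<bar> \<le> B"
  shows "f integrable_on {0..b}"
proof -
  have neg: "negligible (({0..b} - {0<..b}) \<union> ({0<..b} - {0..b}))"
    by (rule negligible_subset[of "{0}"]) auto
  have "(\<lambda>t. B) integrable_on {0..b}" by (intro integrable_continuous_real continuous_intros)
  then have "(\<lambda>t. B) integrable_on {0<..b}"
    using integrable_spike_set_eq[OF neg] by blast
  have "f integrable_on {0<..b}"
    by (rule measurable_bounded_by_integrable_imp_integrable[OF continuous_imp_measurable_on_sets_lebesgue[OF c]
          \<open>(\<lambda>t. B) integrable_on {0<..b}\<close>]) (use bd in auto)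
  then show ?thesis
    using integrable_spike_set_eq[OF neg] by blast
qed

lemma int_abs_bound:
  fixes f g :: "real \<Rightarrow> real"
  assumes f: "f integrable_on {0..x}" and g: "g integrable_on {0..x}"
    and le: "\<And>t. t \<in> {0<..x} \<Longrightarrow> \<bar>f t\<bar> \<le> g t"
  shows "\<bar>integral {0..x} f\<bar> \<le> integral {0..x} g"
proof -
  define g' where "g' = (\<lambda>t. if t = 0 then \<bar>f 0\<bar> else g t)"
  have g': "g' integrable_on {0..x}"
    by (rule integrable_spike[OF g, of "{0}"]) (auto simp: g'_def)
  have eq: "integral {0..x} g' = integral {0..x} g"
    by (rule integral_spike[of "{0}"]) (auto simp: g'_def)
  have "norm (integral {0..x} f) \<le> integral {0..x} g'"
    by (rule integral_norm_bound_integral[OF f g']) (use le in \<open>auto simp: g'_def\<close>)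
  then show ?thesis using eq by simp
qed

lemma exp_lip:
  fixes x y :: real assumes "x \<ge> 0" "y \<ge> 0"
  shows "\<bar>exp (-x) - exp (-y)\<bar> \<le> \<bar>x - y\<bar>"
proof -
  have *: "exp (-u) - exp (-v) \<le> v - u" if "0 \<le> u" "u \<le> v" for u v :: real
  proof -
    have "exp (-u) - exp (-v) = exp (-u) * (1 - exp (-(v-u)))"
      by (simp add: algebra_simps flip: exp_add)
    also have "\<dots> \<le> 1 * (v - u)"
      using exp_ge_add_one_self[of "u-v"] that
      by (intro mult_mono) (auto simp: algebra_simps)
    finally show ?thesis by simp
  qed
  show ?thesis
    using *[of x y] *[of y x] assms by (cases "x \<le> y") auto
qed
lemma quot_bound:
  fixes N N' L L' P Q A C :: real
  assumes "L > 0" "L' > 0" "1/L \<le> P" "1/L' \<le> P" "0 \<le> N'" "N' \<le> Q"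
    "\<bar>N - N'\<bar> \<le> A" "\<bar>L - L'\<bar> \<le> C"
  shows "\<bar>N/L - N'/L'\<bar> \<le> A*P + Q*C*(P*P)"
proof -
  have eq: "N/L - N'/L' = (N - N') * (1/L) + N' * (L' - L) * ((1/L) * (1/L'))"
    using assms by (simp add: field_simps)
  have P0: "P \<ge> 0" using assms(1,3) by (smt (verit) divide_pos_pos)
  have 1: "\<bar>(N - N') * (1/L)\<bar> \<le> A * P"
  proof -
    have "\<bar>(N - N') * (1/L)\<bar> = \<bar>N - N'\<bar> * (1/L)" using assms by (simp add: abs_mult)
    also have "\<dots> \<le> A * P" using assms P0 by (intro mult_mono) auto
    finally show ?thesis .
  qed
  have 2: "\<bar>N' * (L' - L) * ((1/L) * (1/L'))\<bar> \<le> Q * C * (P * P)"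
  proof -
    have "\<bar>N' * (L' - L) * ((1/L) * (1/L'))\<bar> = N' * \<bar>L - L'\<bar> * ((1/L) * (1/L'))"
      using assms by (simp add: abs_mult abs_minus_commute)
    also have "\<dots> \<le> Q * C * (P * P)"
      using assms P0 by (intro mult_mono) auto
    finally show ?thesis .
  qed
  show ?thesis unfolding eq
    using 1 2 abs_triangle_ineq[of "(N - N') * (1/L)" "N' * (L' - L) * ((1/L) * (1/L'))"] by linarith
qed
lemma int_mono_ae:
  fixes f g :: "real \<Rightarrow> real"
  assumes f: "f integrable_on {0..x}" and g: "g integrable_on {0..x}"
    and le: "\<And>t. t \<in> {0<..x} \<Longrightarrow> f t \<le> g t"
  shows "integral {0..x} f \<le> integral {0..x} g"
proof -
  define f' where "f' = (\<lambda>t. if t = 0 then g 0 else f t)"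
  have f': "f' integrable_on {0..x}"
    by (rule integrable_spike[OF f, of "{0}"]) (auto simp: f'_def)
  have eq: "integral {0..x} f' = integral {0..x} f"
    by (rule integral_spike[of "{0}"]) (auto simp: f'_def)
  have "integral {0..x} f' \<le> integral {0..x} g"
    by (rule integral_le[OF f' g]) (use le in \<open>auto simp: f'_def\<close>)
  then show ?thesis using eq by simp
qed

lemma aux:
  fixes L N :: "real \<Rightarrow> real" and \<alpha> a \<mu> \<nu> L1m N1M :: real
  assumes al: "\<alpha> > 0" and a: "a > 0" and mu: "\<mu> > max 1 \<nu>" and nu: "\<nu> > 0"
    and L1m: "L1m > 0" and N1M: "N1M > 0"
    and cL: "continuous_on {0<..\<alpha>} L" and cN: "continuous_on {0<..\<alpha>} N"
    and bd: "\<And>s. s \<in> {0<..\<alpha>} \<Longrightarrow> 0 < L s \<and> 0 < N s \<and> L1m * s powr (-\<mu>) \<le> L s \<and> N s \<le> N1M * s powr (-\<nu>)"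
  shows "(\<lambda>s. N s / L s) integrable_on {0..\<alpha>}"
    and "\<And>x. x \<in> {0..\<alpha>} \<Longrightarrow> integral {0..x} (\<lambda>s. N s / L s) \<ge> 0"
    and "(\<lambda>s. exp (-(\<alpha>*a*integral {0..s} (\<lambda>t. N t / L t))) / (s * L s)) integrable_on {0..\<alpha>}"
    and "\<And>s. s \<in> {0<..\<alpha>} \<Longrightarrow> 1 / L s \<le> s powr \<mu> / L1m"
    and "\<And>s. s \<in> {0<..\<alpha>} \<Longrightarrow> 1 / (s * L s) \<le> s powr (\<mu> - 1) / L1m"
proof -
  show iL: "1 / L s \<le> s powr \<mu> / L1m" if s: "s \<in> {0<..\<alpha>}" for s
  proof -
    have "L1m / s powr \<mu> \<le> L s" using bd[OF s] s by (simp add: powr_minus divide_inverse)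
    then have "1 / L s \<le> 1 / (L1m / s powr \<mu>)"
      using s L1m bd[OF s] by (intro divide_left_mono) auto
    then show ?thesis by simp
  qed
  show isL: "1 / (s * L s) \<le> s powr (\<mu> - 1) / L1m" if s: "s \<in> {0<..\<alpha>}" for s
  proof -
    have "1 / (s * L s) = (1/s) * (1 / L s)" by simp
    also have "\<dots> \<le> (1/s) * (s powr \<mu> / L1m)" using iL[OF s] s by (intro mult_left_mono) auto
    also have "\<dots> = s powr (\<mu> - 1) / L1m" using s by (simp add: powr_diff)
    finally show ?thesis .
  qed
  have hc: "continuous_on {0<..\<alpha>} (\<lambda>s. N s / L s)"
    using bd by (intro continuous_intros cL cN) force
  have hb: "\<bar>N s / L s\<bar> \<le> N1M * \<alpha> powr (\<mu> - \<nu>) / L1m" if s: "s \<in> {0<..\<alpha>}" for s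
  proof -
    have "\<bar>N s / L s\<bar> = N s * (1 / L s)" using bd[OF s] by simp
    also have "\<dots> \<le> (N1M * s powr (-\<nu>)) * (s powr \<mu> / L1m)"
      using bd[OF s] iL[OF s] by (intro mult_mono) auto
    also have "\<dots> = N1M * s powr (\<mu> - \<nu>) / L1m"
      using s by (simp add: powr_minus powr_diff divide_inverse)
    also have "\<dots> \<le> N1M * \<alpha> powr (\<mu> - \<nu>) / L1m"
      using s mu N1M L1m by (intro divide_right_mono mult_left_mono powr_mono2) auto
    finally show ?thesis .
  qed
  show hi: "(\<lambda>s. N s / L s) integrable_on {0..\<alpha>}"
    by (rule int_cont_bdd[OF hc hb])
  show I0: "integral {0..x} (\<lambda>s. N s / L s) \<ge> 0" if x: "x \<in> {0..\<alpha>}" for x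
  proof -
    have pos: "0 \<le> N t / L t" if "t \<in> {0<..x}" for t
    proof -
      have "t \<in> {0<..\<alpha>}" using that x by auto
      from bd[OF this] show ?thesis by simp
    qed
    have "integral {0..x} (\<lambda>s. 0) \<le> integral {0..x} (\<lambda>s. N s / L s)"
      using x by (intro int_mono_ae integrable_on_subinterval[OF hi] pos) auto
    then show ?thesis by simp
  qed
  have Ec: "continuous_on {0..\<alpha>} (\<lambda>s. exp (-(\<alpha>*a*integral {0..s} (\<lambda>t. N t / L t))))"
    by (intro continuous_intros indefinite_integral_continuous_1 hi)
  have gc: "continuous_on {0<..\<alpha>} (\<lambda>s. exp (-(\<alpha>*a*integral {0..s} (\<lambda>t. N t / L t))) / (s * L s))"
  proof (rule continuous_on_divide)
    show "continuous_on {0<..\<alpha>} (\<lambda>s. exp (-(\<alpha>*a*integral {0..s} (\<lambda>t. N t / L t))))"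
      by (rule continuous_on_subset[OF Ec]) auto
    show "continuous_on {0<..\<alpha>} (\<lambda>s. s * L s)" by (intro continuous_intros cL)
    show "\<forall>s\<in>{0<..\<alpha>}. s * L s \<noteq> 0"
    proof
      fix s assume s: "s \<in> {0<..\<alpha>}"
      from bd[OF s] s show "s * L s \<noteq> 0" by simp
    qed
  qed
  have gb: "\<bar>exp (-(\<alpha>*a*integral {0..s} (\<lambda>t. N t / L t))) / (s * L s)\<bar> \<le> \<alpha> powr (\<mu> - 1) / L1m"
    if s: "s \<in> {0<..\<alpha>}" for s
  proof -
    have E1: "exp (-(\<alpha>*a*integral {0..s} (\<lambda>t. N t / L t))) \<le> 1"
      using I0[of s] s al a by simp
    have "\<bar>exp (-(\<alpha>*a*integral {0..s} (\<lambda>t. N t / L t))) / (s * L s)\<bar>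
        = exp (-(\<alpha>*a*integral {0..s} (\<lambda>t. N t / L t))) * (1 / (s * L s))"
      using s bd[OF s] by simp
    also have "\<dots> \<le> 1 * (s powr (\<mu> - 1) / L1m)"
      using E1 isL[OF s] s bd[OF s] by (intro mult_mono) auto
    also have "\<dots> \<le> \<alpha> powr (\<mu> - 1) / L1m"
      using s mu L1m by (auto intro!: divide_right_mono powr_mono2)
    finally show ?thesis .
  qed
  show "(\<lambda>s. exp (-(\<alpha>*a*integral {0..s} (\<lambda>t. N t / L t))) / (s * L s)) integrable_on {0..\<alpha>}"
    by (rule int_cont_bdd[OF gc gb])
qed

lemma pw_ids:
  fixes s \<mu> \<nu> :: real assumes s: "s > 0"
  shows "s powr (\<mu>+1) = s powr \<mu> * s"
    and "s powr (\<mu>-1) = s powr \<mu> / s"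
    and "s powr (2*\<mu>-\<nu>+1) = s powr \<mu> * s powr \<mu> * s / s powr \<nu>"
    and "s powr (2*\<mu>-\<nu>) = s powr \<mu> * s powr \<mu> / s powr \<nu>"
    and "s powr (2*\<mu>) = s powr \<mu> * s powr \<mu>"
    and "s powr (3*\<mu>-\<nu>) = s powr \<mu> * s powr \<mu> * s powr \<mu> / s powr \<nu>"
    and "s powr (2*\<mu>-1) = s powr \<mu> * s powr \<mu> / s"
    and "s powr (-\<nu>) = 1 / s powr \<nu>"
proof -
  have m2: "s powr (2*\<mu>) = s powr \<mu> * s powr \<mu>"
    using powr_add[of s \<mu> \<mu>] by simp
  show "s powr (2*\<mu>) = s powr \<mu> * s powr \<mu>" by (rule m2)
  show "s powr (\<mu>+1) = s powr \<mu> * s" using s by (simp add: powr_add)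
  show "s powr (\<mu>-1) = s powr \<mu> / s" using s by (simp add: powr_diff)
  show "s powr (2*\<mu>-\<nu>+1) = s powr \<mu> * s powr \<mu> * s / s powr \<nu>"
    using s by (simp add: powr_add powr_diff m2)
  show "s powr (2*\<mu>-\<nu>) = s powr \<mu> * s powr \<mu> / s powr \<nu>"
    using s by (simp add: powr_add powr_diff m2)
  have "s powr (3*\<mu>-\<nu>) = s powr ((2*\<mu>+\<mu>)-\<nu>)" by (simp add: algebra_simps)
  then show "s powr (3*\<mu>-\<nu>) = s powr \<mu> * s powr \<mu> * s powr \<mu> / s powr \<nu>"
    using s by (simp only: powr_add powr_diff m2)
  show "s powr (2*\<mu>-1) = s powr \<mu> * s powr \<mu> / s"
    using s by (simp add: powr_add powr_diff m2)
  show "s powr (-\<nu>) = 1 / s powr \<nu>" using s by (simp add: powr_minus divide_inverse)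
qed


lemma alg:
  fixes s q p L1m m1 m2 \<alpha> a \<delta> Nbar N1M Lbar :: real
  assumes "s > 0" "q > 0" "L1m > 0" "m1 > 0" "m2 > 0"
  shows "\<alpha>*a*(\<delta>*(Nbar/L1m*(p * s/m1) + N1M*Lbar/L1m^2*(p*p * s/q/m2)))*(p/s/L1m) + 1*(s*(Lbar*\<delta>))*((p/s/L1m)*(p/s/L1m))
   = \<delta>*(\<alpha>*a*(Nbar/(m1*L1m^2)*(p*p) + N1M*Lbar/(m2*L1m^3)*(p*p*p/q)) + Lbar/L1m^2*(p*p/s))"
  using assms by (simp add: field_simps power2_eq_square power3_eq_cube)

lemma alg2:
  fixes L1m m1 m2 m3 m4 m5 \<alpha> a \<delta> Nbar N1M Lbar X Y Z :: real
  assumes "L1m > 0" "m1 > 0" "m2 > 0" "m3 > 0" "m4 > 0" "m5 > 0"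
  shows "\<delta>*(\<alpha>*a*(Nbar/(m1*L1m^2) * (X/m3) + N1M*Lbar/(m2*L1m^3) * (Y/m4)) + Lbar/L1m^2 * (Z/m5))
   = (\<alpha> * a / L1m^2 * (Nbar * X / (m1 * m3) + Lbar * N1M / L1m * Y / (m2 * m4)) + Lbar / L1m^2 * Z / m5) * \<delta>"
  using assms by (simp add: field_simps power2_eq_square power3_eq_cube)

lemma core:
  fixes L N L' N' :: "real \<Rightarrow> real" and \<alpha> a \<mu> \<nu> L1m N1M Lbar Nbar \<delta> x :: real
  assumes al: "\<alpha> > 0" and a: "a > 0" and mu: "\<mu> > max 1 \<nu>" and nu: "\<nu> > 0"
    and L1m: "L1m > 0" and N1M: "N1M > 0" and Lb: "Lbar \<ge> 0" and Nb: "Nbar \<ge> 0" and d: "\<delta> \<ge> 0"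
    and cL: "continuous_on {0<..\<alpha>} L" and cN: "continuous_on {0<..\<alpha>} N"
    and cL': "continuous_on {0<..\<alpha>} L'" and cN': "continuous_on {0<..\<alpha>} N'"
    and bd: "\<And>s. s \<in> {0<..\<alpha>} \<Longrightarrow> 0 < L s \<and> 0 < N s \<and> L1m * s powr (-\<mu>) \<le> L s \<and> N s \<le> N1M * s powr (-\<nu>)"
    and bd': "\<And>s. s \<in> {0<..\<alpha>} \<Longrightarrow> 0 < L' s \<and> 0 < N' s \<and> L1m * s powr (-\<mu>) \<le> L' s \<and> N' s \<le> N1M * s powr (-\<nu>)"
    and diff: "\<And>s. s \<in> {0<..\<alpha>} \<Longrightarrow> \<bar>L s - L' s\<bar> \<le> Lbar*\<delta> \<and> \<bar>N s - N' s\<bar> \<le> Nbar*\<delta>"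
    and x: "x \<in> {0..\<alpha>}"
  shows "\<bar>integral {0..x} (\<lambda>s. exp (-(\<alpha>*a*integral {0..s} (\<lambda>t. N t / L t))) / (s * L s))
        - integral {0..x} (\<lambda>s. exp (-(\<alpha>*a*integral {0..s} (\<lambda>t. N' t / L' t))) / (s * L' s))\<bar>
        \<le> Fbar1 a \<mu> \<nu> L1m N1M Lbar Nbar \<alpha> * \<delta>"
proof -
  note A = aux[OF al a mu nu L1m N1M cL cN bd]
  note A' = aux[OF al a mu nu L1m N1M cL' cN' bd']
  define h where "h = (\<lambda>t. N t / L t)"
  define h' where "h' = (\<lambda>t. N' t / L' t)"
  define I where "I = (\<lambda>s. integral {0..s} h)"
  define I' where "I' = (\<lambda>s. integral {0..s} h')"
  define g where "g = (\<lambda>s. exp (-(\<alpha>*a*I s)) / (s * L s))"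
  define g' where "g' = (\<lambda>s. exp (-(\<alpha>*a*I' s)) / (s * L' s))"
  have hi: "h integrable_on {0..\<alpha>}" using A(1) unfolding h_def .
  have hi': "h' integrable_on {0..\<alpha>}" using A'(1) unfolding h'_def .
  have gi: "g integrable_on {0..\<alpha>}" using A(3) unfolding g_def I_def h_def .
  have gi': "g' integrable_on {0..\<alpha>}" using A'(3) unfolding g'_def I'_def h'_def .
  define V where "V = (\<lambda>s. \<delta>*(Nbar/L1m * (s powr (\<mu>+1)/(\<mu>+1)) + N1M*Lbar/L1m^2 * (s powr (2*\<mu>-\<nu>+1)/(2*\<mu>-\<nu>+1))))"
  have Ibd: "\<bar>I s - I' s\<bar> \<le> V s" if s: "s \<in> {0<..\<alpha>}" for s
  proof -
    define b where "b = (\<lambda>t. \<delta>*(Nbar/L1m * t powr \<mu> + N1M*Lbar/L1m^2 * t powr (2*\<mu>-\<nu>)))"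
    have bint: "(b has_integral V s) {0..s}"
    proof -
      have 1: "((\<lambda>t. t powr \<mu>) has_integral s powr (\<mu>+1)/(\<mu>+1)) {0..s}"
        using s mu by (intro has_integral_powr_from_0) auto
      have 2: "((\<lambda>t. t powr (2*\<mu>-\<nu>)) has_integral s powr (2*\<mu>-\<nu>+1)/(2*\<mu>-\<nu>+1)) {0..s}"
        using s mu nu by (intro has_integral_powr_from_0) auto
      show ?thesis unfolding b_def V_def
        by (intro has_integral_mult_right has_integral_add 1 2)
    qed
    have "\<bar>integral {0..s} (\<lambda>t. h t - h' t)\<bar> \<le> integral {0..s} b"
    proof (rule int_abs_bound)
      show "(\<lambda>t. h t - h' t) integrable_on {0..s}"
        using s by (intro integrable_diff integrable_on_subinterval[OF hi] integrable_on_subinterval[OF hi']) auto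
      show "b integrable_on {0..s}" using bint by blast
      fix t assume t: "t \<in> {0<..s}"
      then have t': "t \<in> {0<..\<alpha>}" using s by auto
      have "\<bar>h t - h' t\<bar> \<le> (Nbar*\<delta>)*(t powr \<mu>/L1m) + (N1M * t powr (-\<nu>))*(Lbar*\<delta>)*((t powr \<mu>/L1m)*(t powr \<mu>/L1m))"
        unfolding h_def h'_def
        by (rule quot_bound) (use bd[OF t'] bd'[OF t'] A(4)[of t] A'(4)[of t] t' diff[OF t'] in auto)
      also have "\<dots> = b t"
      proof -
        have tp: "t > 0" using t by auto
        have qp: "t powr \<nu> > 0" using tp by auto
        show ?thesis unfolding b_def pw_ids(4)[OF tp, of \<mu> \<nu>] pw_ids(8)[OF tp, of \<nu>]
          using qp L1m by (simp add: field_simps power2_eq_square)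
      qed
      finally show "\<bar>h t - h' t\<bar> \<le> b t" .
    qed
    then show ?thesis
      using bint integral_diff[OF integrable_on_subinterval[OF hi, of 0 s] integrable_on_subinterval[OF hi', of 0 s]] s
      unfolding I_def I'_def by (auto dest: integral_unique)
  qed
  have Ebd: "\<bar>exp (-(\<alpha>*a*I s)) - exp (-(\<alpha>*a*I' s))\<bar> \<le> \<alpha>*a*V s" if s: "s \<in> {0<..\<alpha>}" for s
  proof -
    have "I s \<ge> 0" "I' s \<ge> 0" using A(2)[of s] A'(2)[of s] s unfolding I_def I'_def h_def h'_def by auto
    then have "\<bar>exp (-(\<alpha>*a*I s)) - exp (-(\<alpha>*a*I' s))\<bar> \<le> \<bar>\<alpha>*a*I s - \<alpha>*a*I' s\<bar>"
      using al a by (intro exp_lip) auto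
    also have "\<dots> = \<alpha>*a*\<bar>I s - I' s\<bar>" using al a by (simp add: abs_mult flip: right_diff_distrib)
    also have "\<dots> \<le> \<alpha>*a*V s" using Ibd[OF s] al a by (intro mult_left_mono) auto
    finally show ?thesis .
  qed
  define B where "B = (\<lambda>s. \<delta>*(\<alpha>*a*(Nbar/((\<mu>+1)*L1m^2) * s powr (2*\<mu>) + N1M*Lbar/((2*\<mu>-\<nu>+1)*L1m^3) * s powr (3*\<mu>-\<nu>)) + Lbar/L1m^2 * s powr (2*\<mu>-1)))"
  have gbd: "\<bar>g s - g' s\<bar> \<le> B s" if s: "s \<in> {0<..\<alpha>}" for s
  proof -
    have "\<bar>g s - g' s\<bar> \<le> (\<alpha>*a*V s)*(s powr (\<mu>-1)/L1m) + 1*(s*(Lbar*\<delta>))*((s powr (\<mu>-1)/L1m)*(s powr (\<mu>-1)/L1m))"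
      unfolding g_def g'_def
    proof (rule quot_bound)
      show "0 < s * L s" "0 < s * L' s" using s bd[OF s] bd'[OF s] by auto
      show "1 / (s * L s) \<le> s powr (\<mu>-1) / L1m" "1 / (s * L' s) \<le> s powr (\<mu>-1) / L1m"
        using A(5)[of s] A'(5)[of s] s by auto
      show "0 \<le> exp (-(\<alpha>*a*I' s))" by simp
      have "I' s \<ge> 0" using A'(2)[of s] s unfolding I'_def h'_def by auto
      then show "exp (-(\<alpha>*a*I' s)) \<le> 1" using al a by simp
      show "\<bar>exp (-(\<alpha>*a*I s)) - exp (-(\<alpha>*a*I' s))\<bar> \<le> \<alpha>*a*V s" by (rule Ebd[OF s])
      have "\<bar>s * L s - s * L' s\<bar> = s * \<bar>L s - L' s\<bar>" using s by (simp add: abs_mult flip: right_diff_distrib)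
      also have "\<dots> \<le> s*(Lbar*\<delta>)" using diff[OF s] s by (intro mult_left_mono) auto
      finally show "\<bar>s * L s - s * L' s\<bar> \<le> s*(Lbar*\<delta>)" .
    qed
    also have "\<dots> = B s"
    proof -
      have sp: "s > 0" using s by auto
      have qp: "s powr \<nu> > 0" "s powr \<mu> > 0" using sp by auto
      have d1: "\<mu> + 1 \<noteq> 0" "2*\<mu>-\<nu>+1 \<noteq> 0" using mu nu by auto
      show ?thesis unfolding V_def B_def
        pw_ids(1)[OF sp, of \<mu>] pw_ids(2)[OF sp, of \<mu>] pw_ids(3)[OF sp, of \<mu> \<nu>]
        pw_ids(5)[OF sp, of \<mu>] pw_ids(6)[OF sp, of \<mu> \<nu>] pw_ids(7)[OF sp, of \<mu>]
        by (rule alg) (use sp qp mu nu L1m in auto)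
    qed
    finally show ?thesis .
  qed
  have Bint: "(B has_integral Fbar1 a \<mu> \<nu> L1m N1M Lbar Nbar \<alpha> * \<delta>) {0..\<alpha>}"
  proof -
    have 1: "((\<lambda>t. t powr (2*\<mu>)) has_integral \<alpha> powr (2*\<mu>+1)/(2*\<mu>+1)) {0..\<alpha>}"
      using al mu by (intro has_integral_powr_from_0) auto
    have 2: "((\<lambda>t. t powr (3*\<mu>-\<nu>)) has_integral \<alpha> powr (3*\<mu>-\<nu>+1)/(3*\<mu>-\<nu>+1)) {0..\<alpha>}"
      using al mu nu by (intro has_integral_powr_from_0) auto
    have 3: "((\<lambda>t. t powr (2*\<mu>-1)) has_integral \<alpha> powr (2*\<mu>)/(2*\<mu>)) {0..\<alpha>}"
      using al mu has_integral_powr_from_0[of "2*\<mu>-1" \<alpha>] by auto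
    have "(B has_integral \<delta>*(\<alpha>*a*(Nbar/((\<mu>+1)*L1m^2) * (\<alpha> powr (2*\<mu>+1)/(2*\<mu>+1))
         + N1M*Lbar/((2*\<mu>-\<nu>+1)*L1m^3) * (\<alpha> powr (3*\<mu>-\<nu>+1)/(3*\<mu>-\<nu>+1))) + Lbar/L1m^2 * (\<alpha> powr (2*\<mu>)/(2*\<mu>)))) {0..\<alpha>}"
      unfolding B_def by (intro has_integral_mult_right has_integral_add 1 2 3)
    moreover have "\<delta>*(\<alpha>*a*(Nbar/((\<mu>+1)*L1m^2) * (\<alpha> powr (2*\<mu>+1)/(2*\<mu>+1))
         + N1M*Lbar/((2*\<mu>-\<nu>+1)*L1m^3) * (\<alpha> powr (3*\<mu>-\<nu>+1)/(3*\<mu>-\<nu>+1))) + Lbar/L1m^2 * (\<alpha> powr (2*\<mu>)/(2*\<mu>)))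
         = Fbar1 a \<mu> \<nu> L1m N1M Lbar Nbar \<alpha> * \<delta>"
      unfolding Fbar1_def by (rule alg2) (use mu nu L1m in auto)
    ultimately show ?thesis by (simp only:)
  qed
  have B0: "B s \<ge> 0" if "s \<ge> 0" for s
    unfolding B_def using that d al a Lb Nb L1m N1M mu nu
    by (intro mult_nonneg_nonneg add_nonneg_nonneg divide_nonneg_nonneg) auto
  have Bi: "B integrable_on {0..\<alpha>}" using Bint by blast
  have "\<bar>integral {0..x} g - integral {0..x} g'\<bar> = \<bar>integral {0..x} (\<lambda>s. g s - g' s)\<bar>"
    using x by (subst integral_diff) (auto intro: integrable_on_subinterval[OF gi] integrable_on_subinterval[OF gi'])
  also have "\<dots> \<le> integral {0..x} B"
    using x gbd by (intro int_abs_bound integrable_diff integrable_on_subinterval[OF gi]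
        integrable_on_subinterval[OF gi'] integrable_on_subinterval[OF Bi]) auto
  also have "\<dots> \<le> integral {0..\<alpha>} B"
    using x B0 by (intro integral_subset_le integrable_on_subinterval[OF Bi] Bi) auto
  also have "\<dots> = Fbar1 a \<mu> \<nu> L1m N1M Lbar Nbar \<alpha> * \<delta>" using Bint by (rule integral_unique)
  finally show ?thesis unfolding g_def g'_def I_def I'_def h_def h'_def .
qed

theorem lemma3:
  fixes a Q0 lam0 \<theta>m \<mu> \<nu> L1m L1M N1m N1M Lbar Nbar \<alpha>0 :: real
    and Ls Ns :: "real \<Rightarrow> (real \<Rightarrow> real) \<Rightarrow> real \<Rightarrow> real"
    and f1 f1s :: "real \<Rightarrow> real"
  assumes pos: "a > 0" "Q0 > 0" "lam0 > 0" "\<theta>m > 0"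
    and maps: "\<And>\<alpha> f. \<alpha> > 0 \<Longrightarrow> continuous_on {0..\<alpha>} f \<Longrightarrow>
        continuous_on {0<..\<alpha>} (Ls \<alpha> f) \<and> continuous_on {0<..\<alpha>} (Ns \<alpha> f) \<and>
        (\<forall>s\<in>{0<..\<alpha>}. Ls \<alpha> f s > 0 \<and> Ns \<alpha> f s > 0)"
    and H1_const: "\<mu> > 0" "\<nu> > 0" "L1m > 0" "L1M > 0" "N1m > 0" "N1M > 0" "\<mu> > max 1 \<nu>"
    and H1: "\<And>\<alpha> f \<eta>. \<alpha> > 0 \<Longrightarrow> continuous_on {0..\<alpha>} f \<Longrightarrow> 0 < \<eta> \<Longrightarrow> \<eta> \<le> \<alpha> \<Longrightarrow>
        L1m * \<eta> powr (-\<mu>) \<le> Ls \<alpha> f \<eta> \<and> Ls \<alpha> f \<eta> \<le> L1M * \<eta> powr (-\<mu>) \<and>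
        N1m * \<eta> powr (-\<nu>) \<le> Ns \<alpha> f \<eta> \<and> Ns \<alpha> f \<eta> \<le> N1M * \<eta> powr (-\<nu>)"
    and H2_const: "Lbar \<ge> 0" "Nbar \<ge> 0"
    and H2: "\<And>\<alpha> f g. \<alpha> > 0 \<Longrightarrow> continuous_on {0..\<alpha>} f \<Longrightarrow> continuous_on {0..\<alpha>} g \<Longrightarrow>
        (\<forall>s\<in>{0<..\<alpha>}. \<bar>Ls \<alpha> f s - Ls \<alpha> g s\<bar> \<le> Lbar * supnorm \<alpha> (\<lambda>x. f x - g x)) \<and>
        (\<forall>s\<in>{0<..\<alpha>}. \<bar>Ns \<alpha> f s - Ns \<alpha> g s\<bar> \<le> Nbar * supnorm \<alpha> (\<lambda>x. f x - g x))"
    and alpha0: "\<alpha>0 > 0"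
    and f1: "continuous_on {0..\<alpha>0} f1" and f1s: "continuous_on {0..\<alpha>0} f1s"
  shows "supnorm \<alpha>0 (\<lambda>\<eta>. Uop a Q0 lam0 \<theta>m \<alpha>0 (Ls \<alpha>0) (Ns \<alpha>0) f1 \<eta>
                          - Uop a Q0 lam0 \<theta>m \<alpha>0 (Ls \<alpha>0) (Ns \<alpha>0) f1s \<eta>)
         \<le> 2 * Dstar Q0 lam0 \<theta>m * Fbar1 a \<mu> \<nu> L1m N1M Lbar Nbar \<alpha>0
             * supnorm \<alpha>0 (\<lambda>x. f1 x - f1s x)"
proof -
  define \<delta> where "\<delta> = supnorm \<alpha>0 (\<lambda>x. f1 x - f1s x)"
  have cd: "continuous_on {0..\<alpha>0} (\<lambda>x. \<bar>f1 x - f1s x\<bar>)" by (intro continuous_intros f1 f1s)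
  have bdd: "bdd_above ((\<lambda>x. \<bar>f1 x - f1s x\<bar>) ` {0..\<alpha>0})"
    by (intro bounded_imp_bdd_above compact_imp_bounded compact_continuous_image cd) auto
  have d0: "\<delta> \<ge> 0"
  proof -
    have "\<bar>f1 0 - f1s 0\<bar> \<le> \<delta>" unfolding \<delta>_def supnorm_def
      by (rule cSUP_upper[OF _ bdd]) (use alpha0 in auto)
    then show ?thesis by linarith
  qed
  have D0: "Dstar Q0 lam0 \<theta>m > 0" unfolding Dstar_def using pos by simp
  have mp: "\<And>f. continuous_on {0..\<alpha>0} f \<Longrightarrow>
        continuous_on {0<..\<alpha>0} (Ls \<alpha>0 f) \<and> continuous_on {0<..\<alpha>0} (Ns \<alpha>0 f) \<and>
        (\<forall>s\<in>{0<..\<alpha>0}. 0 < Ls \<alpha>0 f s \<and> 0 < Ns \<alpha>0 f s \<and> L1m * s powr (-\<mu>) \<le> Ls \<alpha>0 f s \<and> Ns \<alpha>0 f s \<le> N1M * s powr (-\<nu>))"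
    using maps[OF alpha0] H1[OF alpha0] by auto
  have core': "\<bar>F1 a \<alpha>0 (Ls \<alpha>0) (Ns \<alpha>0) f1 x - F1 a \<alpha>0 (Ls \<alpha>0) (Ns \<alpha>0) f1s x\<bar>
      \<le> Fbar1 a \<mu> \<nu> L1m N1M Lbar Nbar \<alpha>0 * \<delta>" if x: "x \<in> {0..\<alpha>0}" for x
    unfolding F1_def E1_def
  proof (rule core[OF alpha0 pos(1) H1_const(7) H1_const(2) H1_const(3) H1_const(6) H2_const d0 _ _ _ _ _ _ _ x])
    show "continuous_on {0<..\<alpha>0} (Ls \<alpha>0 f1)" "continuous_on {0<..\<alpha>0} (Ns \<alpha>0 f1)"
      "continuous_on {0<..\<alpha>0} (Ls \<alpha>0 f1s)" "continuous_on {0<..\<alpha>0} (Ns \<alpha>0 f1s)"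
      using mp[OF f1] mp[OF f1s] by auto
    show "\<And>s. s \<in> {0<..\<alpha>0} \<Longrightarrow> 0 < Ls \<alpha>0 f1 s \<and> 0 < Ns \<alpha>0 f1 s \<and> L1m * s powr (-\<mu>) \<le> Ls \<alpha>0 f1 s \<and> Ns \<alpha>0 f1 s \<le> N1M * s powr (-\<nu>)"
      using mp[OF f1] by blast
    show "\<And>s. s \<in> {0<..\<alpha>0} \<Longrightarrow> 0 < Ls \<alpha>0 f1s s \<and> 0 < Ns \<alpha>0 f1s s \<and> L1m * s powr (-\<mu>) \<le> Ls \<alpha>0 f1s s \<and> Ns \<alpha>0 f1s s \<le> N1M * s powr (-\<nu>)"
      using mp[OF f1s] by blast
    show "\<And>s. s \<in> {0<..\<alpha>0} \<Longrightarrow> \<bar>Ls \<alpha>0 f1 s - Ls \<alpha>0 f1s s\<bar> \<le> Lbar*\<delta> \<and> \<bar>Ns \<alpha>0 f1 s - Ns \<alpha>0 f1s s\<bar> \<le> Nbar*\<delta>"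
      using H2[OF alpha0 f1 f1s] unfolding \<delta>_def by blast
  qed
  have pt: "\<bar>Uop a Q0 lam0 \<theta>m \<alpha>0 (Ls \<alpha>0) (Ns \<alpha>0) f1 \<eta> - Uop a Q0 lam0 \<theta>m \<alpha>0 (Ls \<alpha>0) (Ns \<alpha>0) f1s \<eta>\<bar>
      \<le> 2 * Dstar Q0 lam0 \<theta>m * Fbar1 a \<mu> \<nu> L1m N1M Lbar Nbar \<alpha>0 * \<delta>" if eta: "\<eta> \<in> {0..\<alpha>0}" for \<eta>
  proof -
    let ?F = "F1 a \<alpha>0 (Ls \<alpha>0) (Ns \<alpha>0) f1" and ?G = "F1 a \<alpha>0 (Ls \<alpha>0) (Ns \<alpha>0) f1s"
    let ?D = "Dstar Q0 lam0 \<theta>m" and ?K = "Fbar1 a \<mu> \<nu> L1m N1M Lbar Nbar \<alpha>0 * \<delta>"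
    have e: "Uop a Q0 lam0 \<theta>m \<alpha>0 (Ls \<alpha>0) (Ns \<alpha>0) f1 \<eta> - Uop a Q0 lam0 \<theta>m \<alpha>0 (Ls \<alpha>0) (Ns \<alpha>0) f1s \<eta>
        = ?D * ((?F \<alpha>0 - ?G \<alpha>0) - (?F \<eta> - ?G \<eta>))"
      unfolding Uop_def by (simp add: algebra_simps)
    have 1: "\<bar>?F \<alpha>0 - ?G \<alpha>0\<bar> \<le> ?K" using core'[of \<alpha>0] alpha0 by auto
    have 2: "\<bar>?F \<eta> - ?G \<eta>\<bar> \<le> ?K" using core'[OF eta] .
    have "\<bar>(?F \<alpha>0 - ?G \<alpha>0) - (?F \<eta> - ?G \<eta>)\<bar> \<le> 2 * ?K" using 1 2 by linarith
    then have "?D * \<bar>(?F \<alpha>0 - ?G \<alpha>0) - (?F \<eta> - ?G \<eta>)\<bar> \<le> ?D * (2 * ?K)"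
      using D0 by (intro mult_left_mono) auto
    then show ?thesis unfolding e using D0 by (simp add: abs_mult mult_ac)
  qed
  have "supnorm \<alpha>0 (\<lambda>\<eta>. Uop a Q0 lam0 \<theta>m \<alpha>0 (Ls \<alpha>0) (Ns \<alpha>0) f1 \<eta>
                          - Uop a Q0 lam0 \<theta>m \<alpha>0 (Ls \<alpha>0) (Ns \<alpha>0) f1s \<eta>)
         \<le> 2 * Dstar Q0 lam0 \<theta>m * Fbar1 a \<mu> \<nu> L1m N1M Lbar Nbar \<alpha>0 * \<delta>"
    unfolding supnorm_def
    by (rule cSUP_least) (use alpha0 pt in auto)
  then show ?thesis unfolding \<delta>_def .
qed

end
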